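(* Let $(c_i)_{i\ge 1}$ be a sequence of costs with $c_i\in(0,\infty)$, and set $a_i=\frac{c_i}{1+c_i}$. For each $n\ge 2$ consider the one-shot random access game $G(n,\mathbf{c}_n)$ with $\mathbf{c}_n=(c_1,\dots,c_n)$ (defined in the context), and assume that for every $n\ge 2$ this game has a fully-mixed Nash equilibrium (FMNE). Let $p_{i,n}$ denote the transmission probability of transmitter $i$ at this FMNE, and let $S_n=\sum_{i=1}^n X_i^{(n)}$, where $X_1^{(n)},\dots,X_n^{(n)}$ are independent $\{0,1\}$-valued random variables with $\mathbb{P}\{X_i^{(n)}=1\}=p_{i,n}$ (the actions of the transmitters at the FMNE). Then: (i) $S_n$ converges in distribution as $n\to\infty$ if and only if $\lim_{n\to\infty}\sum_{i=1}^n p_{i,n}$ exists and lies in $(0,\infty)$; (ii) moreover, for any $\epsilon>0$ there exist a Poisson random variable $Po(\lambda)$ and finitely many Bernoulli random variables $Bern(p_1),\dots,Bern(p_K)$, all mutually independent, such that $$\limsup_{n\to\infty} d_V\Big(S_n,\ Po(\lambda)+\sum_{k=1}^K Bern(p_k)\Big)\le \epsilon .$$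
   Context: The game $G(n,\mathbf{c})$, for $\mathbf{c}=(c_1,\dots,c_n)\in(0,\infty)^n$, is the strategic game with player set $\{1,\dots,n\}$ (transmitters), action set $\{0,1\}$ for each player ($1$ = transmit, $0$ = back off), and utilities: $u_i(\mathbf{a})=0$ if $a_i=0$; $u_i(\mathbf{a})=1$ if $a_i=1$ and $\sum_j a_j=1$; $u_i(\mathbf{a})=-c_i$ if $a_i=1$ and $\sum_j a_j\ge 2$. Players use independent mixed strategies (transmission probabilities). A fully-mixed Nash equilibrium is a mixed-strategy Nash equilibrium in which every player transmits with probability strictly in $(0,1)$. (Equivalently: the FMNE of $G(n,\mathbf{c}_n)$ exists iff $a_i>\big(\prod_{j=1}^n a_j\big)^{1/(n-1)}$ for all $1\le i\le n$, and then it is unique with $p_{i,n}=1-a_i^{-1}\big(\prod_{j=1}^n a_j\big)^{1/(n-1)}$.) $Po(\lambda)$ denotes a Poisson random variable with mean $\lambda$ and $Bern(p)$ a $\{0,1\}$-valued Bernoulli random variable with mean $p$; a sum of independent random variables inside $d_V$ refers to the convolution of their distributions. For distributions $\mu,\nu$ on $\mathbb{Z}$, the variational distance is $d_V(\mu,\nu)=\sum_{z\in\mathbb{Z}}|\mu(z)-\nu(z)|$, and $d_V(X,Y)$ means the distance between the distributions of $X$ and $Y$. *)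

theory Defs
  imports "HOL-Probability.Probability"
begin

text \<open>Players are 1..n; action profiles assign 0 (back off) or 1 (transmit) to each player.\<close>

definition profiles :: "nat \<Rightarrow> (nat \<Rightarrow> nat) set" where
  "profiles n = Pi\<^sub>E {1..n} (\<lambda>_. {0, 1})"

definition utility :: "(nat \<Rightarrow> real) \<Rightarrow> nat \<Rightarrow> nat \<Rightarrow> (nat \<Rightarrow> nat) \<Rightarrow> real" where
  "utility c n i a =
     (if a i = 0 then 0
      else if (\<Sum>j\<in>{1..n}. a j) = 1 then 1
      else - c i)"

definition profile_prob :: "nat \<Rightarrow> (nat \<Rightarrow> real) \<Rightarrow> (nat \<Rightarrow> nat) \<Rightarrow> real" where
  "profile_prob n p a = (\<Prod>j\<in>{1..n}. if a j = 1 then p j else 1 - p j)"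

definition exp_utility :: "(nat \<Rightarrow> real) \<Rightarrow> nat \<Rightarrow> (nat \<Rightarrow> real) \<Rightarrow> nat \<Rightarrow> real" where
  "exp_utility c n p i = (\<Sum>a\<in>profiles n. profile_prob n p a * utility c n i a)"

definition mixed_NE :: "(nat \<Rightarrow> real) \<Rightarrow> nat \<Rightarrow> (nat \<Rightarrow> real) \<Rightarrow> bool" where
  "mixed_NE c n p \<longleftrightarrow>
     (\<forall>i\<in>{1..n}. 0 \<le> p i \<and> p i \<le> 1) \<and>
     (\<forall>i\<in>{1..n}. \<forall>q. 0 \<le> q \<and> q \<le> 1 \<longrightarrow> exp_utility c n (p(i := q)) i \<le> exp_utility c n p i)"

definition FMNE :: "(nat \<Rightarrow> real) \<Rightarrow> nat \<Rightarrow> (nat \<Rightarrow> real) \<Rightarrow> bool" where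
  "FMNE c n p \<longleftrightarrow> mixed_NE c n p \<and> (\<forall>i\<in>{1..n}. 0 < p i \<and> p i < 1)"

fun bern_sum_pmf :: "(nat \<Rightarrow> real) \<Rightarrow> nat \<Rightarrow> nat pmf" where
  "bern_sum_pmf p 0 = return_pmf 0"
| "bern_sum_pmf p (Suc k) =
     bind_pmf (bern_sum_pmf p k) (\<lambda>s. map_pmf (\<lambda>b. s + (if b then 1 else 0)) (bernoulli_pmf (p (Suc k))))"

definition conv_pmf :: "nat pmf \<Rightarrow> nat pmf \<Rightarrow> nat pmf" where
  "conv_pmf M N = bind_pmf M (\<lambda>x. map_pmf (\<lambda>y. x + y) N)"

text \<open>Variational distance (sum of absolute differences, no factor 1/2).\<close>
definition dV :: "nat pmf \<Rightarrow> nat pmf \<Rightarrow> real" where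
  "dV M N = (\<Sum>z. \<bar>pmf M z - pmf N z\<bar>)"

end

theory Submission
  imports Defs
begin


lemma util_on_profile:
  assumes a: "a \<in> profiles n" and i: "i \<in> {1..n}"
  shows "utility c n i a = (if a i = 1 then (if (\<forall>j\<in>{1..n}-{i}. a j = 0) then 1 else - c i) else 0)"
proof -
  have a01: "\<And>j. j \<in> {1..n} \<Longrightarrow> a j = 0 \<or> a j = 1" using a unfolding profiles_def by auto
  show ?thesis
  proof (cases "a i = 1")
    case True
    have "(\<Sum>j\<in>{1..n}. a j) = a i + (\<Sum>j\<in>{1..n}-{i}. a j)"
      using i by (simp add: sum.remove)
    then have "(\<Sum>j\<in>{1..n}. a j) = 1 \<longleftrightarrow> (\<forall>j\<in>{1..n}-{i}. a j = 0)"
      using True by simp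
    then show ?thesis using True unfolding utility_def by simp
  next
    case False
    then have "a i = 0" using a01 i by blast
    then show ?thesis unfolding utility_def by simp
  qed
qed

lemma exp_utility_formula:
  assumes i: "i \<in> {1..n}"
  shows "exp_utility c n p i = p i * ((1 + c i) * (\<Prod>j\<in>{1..n}-{i}. 1 - p j) - c i)"
proof -
  define f1 where "f1 j v = (if j = i then (if v = (1::nat) then p j else 0) else (if v = 1 then 0 else 1 - p j))" for j v
  define f2 where "f2 j v = (if j = i then (if v = (1::nat) then p j else 0) else (if v = 1 then p j else 1 - p j))" for j v
  have fin: "finite {1..n}" by simp
  have S1: "(\<Sum>a\<in>profiles n. \<Prod>j\<in>{1..n}. f1 j (a j)) = p i * (\<Prod>j\<in>{1..n}-{i}. 1 - p j)"
  proof -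
    have "(\<Sum>a\<in>profiles n. \<Prod>j\<in>{1..n}. f1 j (a j)) = (\<Prod>j\<in>{1..n}. \<Sum>v\<in>{0,1}. f1 j v)"
      unfolding profiles_def by (rule prod_sum_PiE[symmetric]) auto
    also have "\<dots> = (\<Sum>v\<in>{0,1}. f1 i v) * (\<Prod>j\<in>{1..n}-{i}. \<Sum>v\<in>{0,1}. f1 j v)"
      using i by (simp add: prod.remove)
    also have "\<dots> = p i * (\<Prod>j\<in>{1..n}-{i}. 1 - p j)"
      by (intro arg_cong2[where f="(*)"] prod.cong) (auto simp: f1_def)
    finally show ?thesis .
  qed
  have S2: "(\<Sum>a\<in>profiles n. \<Prod>j\<in>{1..n}. f2 j (a j)) = p i"
  proof -
    have "(\<Sum>a\<in>profiles n. \<Prod>j\<in>{1..n}. f2 j (a j)) = (\<Prod>j\<in>{1..n}. \<Sum>v\<in>{0,1}. f2 j v)"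
      unfolding profiles_def by (rule prod_sum_PiE[symmetric]) auto
    also have "\<dots> = (\<Sum>v\<in>{0,1}. f2 i v) * (\<Prod>j\<in>{1..n}-{i}. \<Sum>v\<in>{0,1}. f2 j v)"
      using i by (simp add: prod.remove)
    also have "\<dots> = p i"
      by (auto simp: f2_def)
    finally show ?thesis .
  qed
  have pt: "profile_prob n p a * utility c n i a =
      (1 + c i) * (\<Prod>j\<in>{1..n}. f1 j (a j)) - c i * (\<Prod>j\<in>{1..n}. f2 j (a j))"
    if a: "a \<in> profiles n" for a
  proof -
    have a01: "\<And>j. j \<in> {1..n} \<Longrightarrow> a j = 0 \<or> a j = 1" using a unfolding profiles_def by auto
    show ?thesis
    proof (cases "a i = 1")
      case False
      have z1: "(\<Prod>j\<in>{1..n}. f1 j (a j)) = 0"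
        using i False by (intro prod_zero) (auto simp: f1_def intro!: bexI[of _ i])
      have z2: "(\<Prod>j\<in>{1..n}. f2 j (a j)) = 0"
        using i False by (intro prod_zero) (auto simp: f2_def intro!: bexI[of _ i])
      show ?thesis unfolding z1 z2 using False util_on_profile[OF a i, of c] by simp
    next
      case True
      have e2: "(\<Prod>j\<in>{1..n}. f2 j (a j)) = profile_prob n p a"
        unfolding profile_prob_def using True by (intro prod.cong) (auto simp: f2_def)
      show ?thesis
      proof (cases "\<forall>j\<in>{1..n}-{i}. a j = 0")
        case True2: True
        have e1: "(\<Prod>j\<in>{1..n}. f1 j (a j)) = profile_prob n p a"
          unfolding profile_prob_def using True True2 by (intro prod.cong) (auto simp: f1_def)
        show ?thesis unfolding e1 e2 using True True2 util_on_profile[OF a i, of c] by (simp add: algebra_simps)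
      next
        case False
        then obtain j where j: "j \<in> {1..n}-{i}" "a j \<noteq> 0" by blast
        then have "a j = 1" using a01[of j] j by auto
        then have e1: "(\<Prod>j\<in>{1..n}. f1 j (a j)) = 0"
          using j by (intro prod_zero) (auto simp: f1_def intro!: bexI[of _ j])
        have "\<not> (\<forall>j\<in>{1..n}-{i}. a j = 0)" using j(1) j(2) by auto
        then have u: "utility c n i a = - c i" using True util_on_profile[OF a i, of c] by (simp only: if_True if_False simp_thms)
        show ?thesis unfolding e1 e2 u by (simp add: algebra_simps)
      qed
    qed
  qed
  have "exp_utility c n p i = (\<Sum>a\<in>profiles n. (1 + c i) * (\<Prod>j\<in>{1..n}. f1 j (a j)) - c i * (\<Prod>j\<in>{1..n}. f2 j (a j)))"
    unfolding exp_utility_def by (rule sum.cong) (auto simp: pt)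
  also have "\<dots> = (1 + c i) * p i * (\<Prod>j\<in>{1..n}-{i}. 1 - p j) - c i * p i"
    by (simp only: sum_subtractf sum_distrib_left[symmetric] S1 S2 mult.assoc)
  finally show ?thesis by (simp add: algebra_simps)
qed

lemma FMNE_prod:
  assumes "FMNE c n p" and i: "i \<in> {1..n}" and ci: "0 < c i"
  shows "(\<Prod>j\<in>{1..n}-{i}. 1 - p j) = c i / (1 + c i)"
proof -
  from assms have p: "0 < p i" "p i < 1" and ne: "\<And>q. 0 \<le> q \<Longrightarrow> q \<le> 1 \<Longrightarrow> exp_utility c n (p(i := q)) i \<le> exp_utility c n p i"
    unfolding FMNE_def mixed_NE_def by auto
  define C where "C = (1 + c i) * (\<Prod>j\<in>{1..n}-{i}. 1 - p j) - c i"
  have eq: "exp_utility c n (p(i := q)) i = q * C" for q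
  proof -
    have "(\<Prod>j\<in>{1..n}-{i}. 1 - (p(i:=q)) j) = (\<Prod>j\<in>{1..n}-{i}. 1 - p j)"
      by (intro prod.cong) auto
    then show ?thesis unfolding exp_utility_formula[OF i] C_def by simp
  qed
  have e0: "exp_utility c n p i = p i * C" unfolding exp_utility_formula[OF i] C_def by simp
  have "0 \<le> p i * C" using ne[of 0] eq[of 0] e0 by simp
  then have "C \<ge> 0" using p by (simp add: zero_le_mult_iff)
  moreover have "C \<le> p i * C" using ne[of 1] eq[of 1] e0 by simp
  then have "C \<le> 0" using p by (smt (verit) mult_le_cancel_right1)
  ultimately have "C = 0" by simp
  then show ?thesis unfolding C_def using ci by (simp add: field_simps)
qed



definition bp :: "real \<Rightarrow> nat pmf" where
  "bp q = map_pmf (\<lambda>b. if b then 1 else 0) (bernoulli_pmf q)"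

lemma bern_sum_Suc': "bern_sum_pmf p (Suc k) = conv_pmf (bern_sum_pmf p k) (bp (p (Suc k)))"
  by (simp add: conv_pmf_def bp_def map_pmf_comp)

lemma conv_pmf_bind: "conv_pmf M N = bind_pmf M (\<lambda>x. bind_pmf N (\<lambda>y. return_pmf (x + y)))"
  unfolding conv_pmf_def map_pmf_def by (simp add: comp_def)

lemma conv_assoc: "conv_pmf (conv_pmf A B) C = conv_pmf A (conv_pmf B C)"
  unfolding conv_pmf_bind by (simp add: bind_assoc_pmf bind_return_pmf add.assoc)

lemma conv_comm: "conv_pmf A B = conv_pmf B A"
  unfolding conv_pmf_bind by (subst bind_commute_pmf) (simp add: add.commute)

lemma conv_return0: "conv_pmf M (return_pmf 0) = M"
  unfolding conv_pmf_bind by (simp add: bind_return_pmf bind_return_pmf')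

lemma conv_return0': "conv_pmf (return_pmf 0) M = M"
  using conv_return0 conv_comm by metis

lemma pmf_map_add: "pmf (map_pmf (\<lambda>y. x + y) (B::nat pmf)) z = (if x \<le> z then pmf B (z - x) else 0)"
proof (cases "x \<le> z")
  case True
  have "pmf (map_pmf (\<lambda>y. x + y) B) (x + (z - x)) = pmf B (z - x)"
    by (rule pmf_map_inj'[of "\<lambda>y. x + y" B "z - x"]) (simp add: inj_def)
  then show ?thesis using True by simp
next
  case False
  then show ?thesis by (subst pmf_map_outside) auto
qed

lemma pmf_conv: "pmf (conv_pmf A B) z = (\<Sum>x\<le>z. pmf A x * pmf B (z - x))"
  unfolding conv_pmf_def pmf_bind pmf_map_add
  by (subst integral_measure_pmf_real[where A="{..z}"]) (auto split: if_splits simp: mult.commute intro!: sum.cong)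

lemma summable_pmf: "summable (\<lambda>n. pmf (M::nat pmf) n)"
  using pmf_abs_summable[of M UNIV] unfolding abs_summable_on_nat_iff' by simp

lemma suminf_pmf: "(\<Sum>n. pmf (M::nat pmf) n) = 1"
  using infsetsum_nat'[OF pmf_abs_summable[of M UNIV]] infsetsum_pmf_eq_1[of M UNIV] by simp

lemma summable_dV: "summable (\<lambda>z. \<bar>pmf (M::nat pmf) z - pmf N z\<bar>)"
  by (rule summable_comparison_test[OF _ summable_add[OF summable_pmf[of M] summable_pmf[of N]]])
     (auto intro!: exI[of _ 0] simp: abs_le_iff)

lemma dV_nonneg: "0 \<le> dV M N"
  unfolding dV_def by (intro suminf_nonneg summable_dV) auto

lemma dV_sym: "dV M N = dV N M"
  unfolding dV_def by (simp add: abs_minus_commute)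

lemma dV_triangle: "dV M P \<le> dV M N + dV N P"
proof -
  have "dV M P \<le> (\<Sum>z. \<bar>pmf M z - pmf N z\<bar> + \<bar>pmf N z - pmf P z\<bar>)"
    unfolding dV_def by (intro suminf_le summable_dV summable_add) auto
  also have "\<dots> = dV M N + dV N P"
    unfolding dV_def by (intro suminf_add[symmetric] summable_dV)
  finally show ?thesis .
qed

lemma dV_self: "dV M M = 0"
  unfolding dV_def by simp

lemma sum_abs_le_dV: "(\<Sum>z\<in>I. \<bar>pmf M z - pmf N z\<bar>) \<le> dV M N" if "finite I"
  unfolding dV_def by (rule sum_le_suminf[OF summable_dV that]) auto

lemma pmf_le_dV: "\<bar>pmf M z - pmf N z\<bar> \<le> dV M N"
  using sum_abs_le_dV[of "{z}" M N] by simp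

lemma partial_le_dV: "\<bar>(\<Sum>z\<in>I. pmf M z) - (\<Sum>z\<in>I. pmf N z)\<bar> \<le> dV M N" if "finite I"
proof -
  have "\<bar>(\<Sum>z\<in>I. pmf M z) - (\<Sum>z\<in>I. pmf N z)\<bar> = \<bar>\<Sum>z\<in>I. pmf M z - pmf N z\<bar>"
    by (simp add: sum_subtractf)
  also have "\<dots> \<le> (\<Sum>z\<in>I. \<bar>pmf M z - pmf N z\<bar>)" by (rule sum_abs)
  also have "\<dots> \<le> dV M N" by (rule sum_abs_le_dV[OF that])
  finally show ?thesis .
qed

lemma dV_conv_left: "dV (conv_pmf A B) (conv_pmf A' B) \<le> dV A A'"
proof -
  define a where "a x = \<bar>pmf A x - pmf A' x\<bar>" for x
  define b where "b x = pmf B x" for x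
  have sa: "summable (\<lambda>k. norm (a k))" unfolding a_def using summable_dV by simp
  have sb: "summable (\<lambda>k. norm (b k))" unfolding b_def using summable_pmf by simp
  have pt: "\<bar>pmf (conv_pmf A B) z - pmf (conv_pmf A' B) z\<bar> \<le> (\<Sum>i\<le>z. a i * b (z - i))" for z
  proof -
    have "\<bar>pmf (conv_pmf A B) z - pmf (conv_pmf A' B) z\<bar> = \<bar>\<Sum>i\<le>z. (pmf A i - pmf A' i) * pmf B (z - i)\<bar>"
      unfolding pmf_conv by (simp add: sum_subtractf left_diff_distrib)
    also have "\<dots> \<le> (\<Sum>i\<le>z. \<bar>(pmf A i - pmf A' i) * pmf B (z - i)\<bar>)" by (rule sum_abs)
    also have "\<dots> = (\<Sum>i\<le>z. a i * b (z - i))" by (simp add: a_def b_def abs_mult)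
    finally show ?thesis .
  qed
  have "dV (conv_pmf A B) (conv_pmf A' B) \<le> (\<Sum>z. \<Sum>i\<le>z. a i * b (z - i))"
    unfolding dV_def by (intro suminf_le pt summable_dV summable_Cauchy_product[OF sa sb])
  also have "\<dots> = (\<Sum>k. a k) * (\<Sum>k. b k)" by (rule Cauchy_product[OF sa sb, symmetric])
  also have "\<dots> = dV A A'" unfolding a_def b_def dV_def suminf_pmf by simp
  finally show ?thesis .
qed

lemma dV_conv_right: "dV (conv_pmf A B) (conv_pmf A B') \<le> dV B B'"
  using dV_conv_left[of B A B'] by (simp add: conv_comm)

lemma dV_conv: "dV (conv_pmf A B) (conv_pmf A' B') \<le> dV A A' + dV B B'"
  using dV_triangle[of "conv_pmf A B" "conv_pmf A' B'" "conv_pmf A' B"] dV_conv_left[of A B A'] dV_conv_right[of A' B B']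
  by linarith

lemma poisson_add:
  assumes a: "0 < a" and b: "0 < b"
  shows "conv_pmf (poisson_pmf a) (poisson_pmf b) = poisson_pmf (a + b)"
proof (rule pmf_eqI)
  fix z
  have ab: "0 < a + b" using a b by simp
  have "pmf (conv_pmf (poisson_pmf a) (poisson_pmf b)) z =
        (\<Sum>x\<le>z. a ^ x / fact x * exp (- a) * (b ^ (z - x) / fact (z - x) * exp (- b)))"
    unfolding pmf_conv using a b by simp
  also have "\<dots> = (\<Sum>x\<le>z. (exp (-(a+b)) / fact z) * (of_nat (z choose x) * a ^ x * b ^ (z - x)))"
  proof (rule sum.cong)
    fix x assume "x \<in> {..z}"
    then have xz: "x \<le> z" by simp
    have "exp (-a) * exp (-b) = exp (-(a+b))" by (simp add: exp_add[symmetric])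
    then show "a ^ x / fact x * exp (- a) * (b ^ (z - x) / fact (z - x) * exp (- b)) =
               (exp (-(a+b)) / fact z) * (of_nat (z choose x) * a ^ x * b ^ (z - x))"
      using xz by (simp add: binomial_fact field_simps)
  qed simp
  also have "\<dots> = (exp (-(a+b)) / fact z) * (a + b) ^ z"
    unfolding sum_distrib_left[symmetric] binomial_ring by (rule refl)
  also have "\<dots> = pmf (poisson_pmf (a + b)) z" using ab by simp
  finally show "pmf (conv_pmf (poisson_pmf a) (poisson_pmf b)) z = pmf (poisson_pmf (a + b)) z" .
qed



lemma pmf_bp: assumes "0 \<le> q" "q \<le> 1"
  shows "pmf (bp q) k = (if k = 0 then 1 - q else if k = 1 then q else 0)"
proof -
  have "pmf (bp q) k = measure (measure_pmf (bernoulli_pmf q)) {b. (if b then 1 else 0) = k}"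
    unfolding bp_def pmf_map by (simp add: vimage_def)
  also have "\<dots> = (if k = 0 then 1 - q else if k = 1 then q else 0)"
  proof -
    have "k = 0 \<Longrightarrow> {b. (if b then 1 else 0) = k} = {False}" by auto
    moreover have "k = 1 \<Longrightarrow> {b. (if b then 1 else 0) = k} = {True}" by auto
    moreover have "k \<noteq> 0 \<Longrightarrow> k \<noteq> 1 \<Longrightarrow> {b. (if b then 1 else (0::nat)) = k} = {}" by auto
    ultimately show ?thesis using assms by (auto simp: measure_pmf_single)
  qed
  finally show ?thesis .
qed

lemma suminf_pmf_shift: "(\<Sum>n. pmf (N::nat pmf) (n + k)) = 1 - (\<Sum>i<k. pmf N i)"
  using suminf_split_initial_segment[OF summable_pmf[of N], of k] suminf_pmf[of N] by simp

lemma dV_shift: "dV M N = (\<Sum>n. \<bar>pmf M (n + k) - pmf N (n + k)\<bar>) + (\<Sum>i<k. \<bar>pmf M i - pmf N i\<bar>)"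
  unfolding dV_def by (rule suminf_split_initial_segment[OF summable_dV])

lemma dV_bp: assumes "0 \<le> p" "p \<le> 1" "0 \<le> q" "q \<le> 1"
  shows "dV (bp p) (bp q) = 2 * \<bar>p - q\<bar>"
proof -
  have "dV (bp p) (bp q) = (\<Sum>z\<in>{0,1}. \<bar>pmf (bp p) z - pmf (bp q) z\<bar>)"
    unfolding dV_def by (rule suminf_finite) (auto simp: pmf_bp assms)
  also have "\<dots> = 2 * \<bar>p - q\<bar>" using assms by (simp add: pmf_bp abs_minus_commute)
  finally show ?thesis .
qed

lemma dV_return0: "dV (return_pmf 0) N = 2 * (1 - pmf N 0)"
proof -
  have "dV (return_pmf 0) N = (\<Sum>n. \<bar>pmf (return_pmf 0) (n + 1) - pmf N (n + 1)\<bar>) + (\<Sum>i<1. \<bar>pmf (return_pmf 0) i - pmf N i\<bar>)"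
    by (rule dV_shift)
  also have "(\<lambda>n. \<bar>pmf (return_pmf 0) (n + 1) - pmf N (n + 1)\<bar>) = (\<lambda>n. pmf N (n + 1))"
    by (auto simp: pmf_return)
  also have "(\<Sum>n. pmf N (n + 1)) = 1 - pmf N 0" using suminf_pmf_shift[of N 1] by simp
  also have "(\<Sum>i<1. \<bar>pmf (return_pmf 0) i - pmf N i\<bar>) = 1 - pmf N 0"
    using pmf_le_1[of N 0] by (simp add: pmf_return)
  finally show ?thesis by simp
qed

lemma exp_ineqs: fixes x :: real assumes "0 \<le> x" shows "1 - exp (-x) \<le> x" "x - x^2 \<le> 1 - exp (-x)"
proof -
  show "1 - exp (-x) \<le> x" using exp_ge_add_one_self[of "-x"] by simp
  have e: "1 + x \<le> exp x" by (rule exp_ge_add_one_self)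
  have "exp (-x) = 1 / exp x" by (simp add: exp_minus field_simps)
  also have "\<dots> \<le> 1 / (1 + x)" using e assms by (intro divide_left_mono) auto
  also have "\<dots> \<le> 1 - x + x^2"
    using assms by (simp add: field_simps power2_eq_square)
  finally show "x - x^2 \<le> 1 - exp (-x)" by simp
qed

lemma dV_bp_poisson: assumes x: "0 < x"
  shows "dV (bp (1 - exp (-x))) (poisson_pmf x) \<le> 2 * x^2"
proof -
  have q: "0 \<le> 1 - exp (-x)" "1 - exp (-x) \<le> 1" using x by auto
  define r where "r = 1 - exp (-x) - x * exp (-x)"
  have r0: "0 \<le> r"
  proof -
    have "(1 + x) * exp (-x) \<le> exp x * exp (-x)"
      using exp_ge_add_one_self[of x] by (intro mult_right_mono) auto
    then show ?thesis unfolding r_def by (simp add: exp_minus_inverse algebra_simps)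
  qed
  have r1: "r \<le> x^2"
  proof -
    have "r \<le> x - x * exp (-x)" unfolding r_def using exp_ineqs(1)[of x] x by simp
    also have "\<dots> = x * (1 - exp (-x))" by (simp add: algebra_simps)
    also have "\<dots> \<le> x * x" using exp_ineqs(1)[of x] x by (intro mult_left_mono) auto
    finally show ?thesis by (simp add: power2_eq_square)
  qed
  have "dV (bp (1 - exp (-x))) (poisson_pmf x) =
    (\<Sum>n. \<bar>pmf (bp (1 - exp (-x))) (n + 2) - pmf (poisson_pmf x) (n + 2)\<bar>) +
    (\<Sum>i<2. \<bar>pmf (bp (1 - exp (-x))) i - pmf (poisson_pmf x) i\<bar>)"
    by (rule dV_shift)
  also have "(\<lambda>n. \<bar>pmf (bp (1 - exp (-x))) (n + 2) - pmf (poisson_pmf x) (n + 2)\<bar>) = (\<lambda>n. pmf (poisson_pmf x) (n + 2))"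
    using q by (auto simp: pmf_bp simp del: pmf_poisson)
  also have "(\<Sum>n. pmf (poisson_pmf x) (n + 2)) = r"
    unfolding suminf_pmf_shift using x by (simp add: r_def numeral_2_eq_2)
  also have "(\<Sum>i<2. \<bar>pmf (bp (1 - exp (-x))) i - pmf (poisson_pmf x) i\<bar>) = r"
    using x q r0 by (simp add: pmf_bp numeral_2_eq_2 r_def abs_minus_commute)
  finally show ?thesis using r1 by simp
qed

lemma dV_poisson_le: assumes a: "0 < a" and ab: "a \<le> b"
  shows "dV (poisson_pmf a) (poisson_pmf b) \<le> 2 * (b - a)"
proof (cases "a = b")
  case True then show ?thesis by (simp add: dV_self)
next
  case False
  then have d: "0 < b - a" using ab by simp
  have "poisson_pmf b = conv_pmf (poisson_pmf a) (poisson_pmf (b - a))"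
    using poisson_add[OF a d] by simp
  moreover have "poisson_pmf a = conv_pmf (poisson_pmf a) (return_pmf 0)" by (simp add: conv_return0)
  ultimately have "dV (poisson_pmf a) (poisson_pmf b) \<le> dV (return_pmf 0) (poisson_pmf (b - a))"
    using dV_conv_right[of "poisson_pmf a" "return_pmf 0" "poisson_pmf (b - a)"] by simp
  also have "\<dots> = 2 * (1 - exp (-(b - a)))" using d by (simp add: dV_return0)
  also have "\<dots> \<le> 2 * (b - a)" using exp_ineqs(1)[of "b - a"] d by simp
  finally show ?thesis .
qed

lemma dV_poisson: assumes "0 < a" "0 < b"
  shows "dV (poisson_pmf a) (poisson_pmf b) \<le> 2 * \<bar>a - b\<bar>"
proof (cases "a \<le> b")
  case True then show ?thesis using dV_poisson_le[of a b] assms by simp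
next
  case False then show ?thesis using dV_poisson_le[of b a] assms dV_sym[of "poisson_pmf a" "poisson_pmf b"] by simp
qed



lemma bern_sum_split: assumes "K \<le> n"
  shows "bern_sum_pmf p n = conv_pmf (bern_sum_pmf p K) (bern_sum_pmf (\<lambda>i. p (K + i)) (n - K))"
  using assms
proof (induction n rule: dec_induct)
  case base
  then show ?case by (simp add: conv_return0)
next
  case (step n)
  have "Suc n - K = Suc (n - K)" using step.hyps by simp
  then have "bern_sum_pmf (\<lambda>i. p (K + i)) (Suc n - K) =
     conv_pmf (bern_sum_pmf (\<lambda>i. p (K + i)) (n - K)) (bp (p (Suc n)))"
    using step.hyps by (simp add: bern_sum_Suc' del: bern_sum_pmf.simps)
  then show ?case
    by (simp only: bern_sum_Suc' step.IH conv_assoc)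
qed

lemma dV_bern_sum:
  assumes "\<And>i. i \<in> {1..K} \<Longrightarrow> 0 \<le> p i \<and> p i \<le> 1" "\<And>i. i \<in> {1..K} \<Longrightarrow> 0 \<le> q i \<and> q i \<le> 1"
  shows "dV (bern_sum_pmf p K) (bern_sum_pmf q K) \<le> 2 * (\<Sum>i=1..K. \<bar>p i - q i\<bar>)"
  using assms
proof (induction K)
  case 0
  then show ?case by (simp add: dV_self)
next
  case (Suc K)
  have "dV (bern_sum_pmf p (Suc K)) (bern_sum_pmf q (Suc K)) \<le>
        dV (bern_sum_pmf p K) (bern_sum_pmf q K) + dV (bp (p (Suc K))) (bp (q (Suc K)))"
    unfolding bern_sum_Suc' by (rule dV_conv)
  also have "dV (bp (p (Suc K))) (bp (q (Suc K))) = 2 * \<bar>p (Suc K) - q (Suc K)\<bar>"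
    using Suc.prems[of "Suc K"] by (intro dV_bp) auto
  also have "dV (bern_sum_pmf p K) (bern_sum_pmf q K) \<le> 2 * (\<Sum>i=1..K. \<bar>p i - q i\<bar>)"
    using Suc.prems by (intro Suc.IH) auto
  finally show ?case by (simp add: algebra_simps)
qed

lemma dV_tail_poisson:
  assumes a: "0 < a" and x: "\<And>i. i \<in> {1..m} \<Longrightarrow> 0 < x i"
  shows "dV (conv_pmf (poisson_pmf a) (bern_sum_pmf (\<lambda>i. 1 - exp (- x i)) m))
            (poisson_pmf (a + (\<Sum>i=1..m. x i))) \<le> 2 * (\<Sum>i=1..m. (x i)^2)"
  using x
proof (induction m)
  case 0
  then show ?case by (simp add: conv_return0 dV_self)
next
  case (Suc m)
  have s0: "0 \<le> (\<Sum>i=1..m. x i)" using Suc.prems by (intro sum_nonneg) (auto intro: less_imp_le)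
  have xs: "0 < x (Suc m)" using Suc.prems by simp
  have as: "0 < a + (\<Sum>i=1..m. x i)" using a s0 by simp
  have eq: "poisson_pmf (a + (\<Sum>i=1..Suc m. x i)) = conv_pmf (poisson_pmf (a + (\<Sum>i=1..m. x i))) (poisson_pmf (x (Suc m)))"
    using poisson_add[OF as xs] by (simp add: add.assoc)
  have "dV (conv_pmf (poisson_pmf a) (bern_sum_pmf (\<lambda>i. 1 - exp (- x i)) (Suc m)))
            (poisson_pmf (a + (\<Sum>i=1..Suc m. x i))) =
        dV (conv_pmf (conv_pmf (poisson_pmf a) (bern_sum_pmf (\<lambda>i. 1 - exp (- x i)) m)) (bp (1 - exp (- x (Suc m)))))
           (conv_pmf (poisson_pmf (a + (\<Sum>i=1..m. x i))) (poisson_pmf (x (Suc m))))"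
    unfolding eq bern_sum_Suc' conv_assoc by simp
  also have "\<dots> \<le> dV (conv_pmf (poisson_pmf a) (bern_sum_pmf (\<lambda>i. 1 - exp (- x i)) m)) (poisson_pmf (a + (\<Sum>i=1..m. x i)))
       + dV (bp (1 - exp (- x (Suc m)))) (poisson_pmf (x (Suc m)))"
    by (rule dV_conv)
  also have "\<dots> \<le> 2 * (\<Sum>i=1..m. (x i)^2) + 2 * (x (Suc m))^2"
    using Suc.IH Suc.prems dV_bp_poisson[OF xs] by (intro add_mono) auto
  finally show ?case by (simp add: algebra_simps)
qed



lemma cdf_distr_pmf:
  "cdf (distr (measure_pmf (P::nat pmf)) borel real) x = (\<Sum>k<nat (\<lfloor>x\<rfloor> + 1). pmf P k)"
proof -
  have "cdf (distr (measure_pmf P) borel real) x = measure (measure_pmf P) (real -` {..x})"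
    unfolding cdf_def2 by (subst measure_distr) auto
  also have "real -` {..x} = {..<nat (\<lfloor>x\<rfloor> + 1)}"
  proof -
    have "real k \<le> x \<longleftrightarrow> k < nat (\<lfloor>x\<rfloor> + 1)" for k
    proof -
      have "k < nat (\<lfloor>x\<rfloor> + 1) \<longleftrightarrow> int k < \<lfloor>x\<rfloor> + 1" by (rule zless_nat_eq_int_zless)
      also have "\<dots> \<longleftrightarrow> int k \<le> \<lfloor>x\<rfloor>" by simp
      also have "\<dots> \<longleftrightarrow> real_of_int (int k) \<le> x" by (rule le_floor_iff)
      finally show ?thesis by simp
    qed
    then show ?thesis by auto
  qed
  also have "measure (measure_pmf P) {..<nat (\<lfloor>x\<rfloor> + 1)} = (\<Sum>k<nat (\<lfloor>x\<rfloor> + 1). pmf P k)"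
    by (rule measure_measure_pmf_finite) simp
  finally show ?thesis .
qed

lemma partial_pmf_le1: "(\<Sum>k<N. pmf (P::nat pmf) k) \<le> 1"
  using sum_le_suminf[OF summable_pmf[of P], of "{..<N}"] suminf_pmf[of P] by simp

lemma weak_conv_from_dV:
  fixes S :: "nat \<Rightarrow> nat pmf"
  assumes approx: "\<And>e. 0 < e \<Longrightarrow> \<exists>T. eventually (\<lambda>n. dV (S n) T \<le> e) sequentially"
  shows "\<exists>M. real_distribution M \<and> weak_conv_m (\<lambda>n. distr (measure_pmf (S n)) borel real) M"
proof -
  have cau: "Cauchy (\<lambda>n. pmf (S n) k)" for k
  proof (rule metric_CauchyI)
    fix e :: real assume e: "0 < e"
    obtain T where T: "eventually (\<lambda>n. dV (S n) T \<le> e / 3) sequentially"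
      using approx[of "e/3"] e by auto
    then obtain N where N: "\<And>n. n \<ge> N \<Longrightarrow> dV (S n) T \<le> e / 3"
      unfolding eventually_sequentially by auto
    show "\<exists>M. \<forall>m\<ge>M. \<forall>n\<ge>M. dist (pmf (S m) k) (pmf (S n) k) < e"
    proof (intro exI allI impI)
      fix m n assume "m \<ge> N" "n \<ge> N"
      then have "dV (S m) T \<le> e/3" "dV (S n) T \<le> e/3" using N by auto
      moreover have "\<bar>pmf (S m) k - pmf T k\<bar> \<le> dV (S m) T" "\<bar>pmf (S n) k - pmf T k\<bar> \<le> dV (S n) T"
        by (rule pmf_le_dV)+
      ultimately show "dist (pmf (S m) k) (pmf (S n) k) < e"
        using e by (simp add: dist_real_def)
    qed
  qed
  define f where "f k = lim (\<lambda>n. pmf (S n) k)" for k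
  have lim: "(\<lambda>n. pmf (S n) k) \<longlonglongrightarrow> f k" for k
    unfolding f_def using cau[of k] by (simp add: Cauchy_convergent_iff convergent_LIMSEQ_iff)
  have f0: "0 \<le> f k" for k
    by (rule LIMSEQ_le_const[OF lim]) auto
  have limsum: "(\<lambda>n. \<Sum>k<N. pmf (S n) k) \<longlonglongrightarrow> (\<Sum>k<N. f k)" for N
    by (intro tendsto_sum lim)
  have fle: "(\<Sum>k<N. f k) \<le> 1" for N
    by (rule LIMSEQ_le_const2[OF limsum]) (auto intro: partial_pmf_le1)
  have sf: "summable f" by (rule summableI_nonneg_bounded[OF f0 fle])
  have sle: "suminf f \<le> 1" by (rule suminf_le_const[OF sf fle])
  have sge: "1 - 2 * e \<le> suminf f" if e: "0 < e" for e
  proof -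
    obtain T where T: "eventually (\<lambda>n. dV (S n) T \<le> e) sequentially"
      using approx[OF e] by auto
    have "(\<lambda>N. \<Sum>k<N. pmf T k) \<longlonglongrightarrow> 1"
      using summable_LIMSEQ[OF summable_pmf[of T]] suminf_pmf[of T] by simp
    then obtain N where N: "\<bar>(\<Sum>k<N. pmf T k) - 1\<bar> < e"
      using e unfolding LIMSEQ_def dist_real_def by (metis order_refl)
    have "1 - 2 * e \<le> (\<Sum>k<N. f k)"
    proof (rule LIMSEQ_le_const[OF limsum])
      obtain M where M: "\<And>n. n \<ge> M \<Longrightarrow> dV (S n) T \<le> e" using T unfolding eventually_sequentially by auto
      show "\<exists>M. \<forall>n\<ge>M. 1 - 2 * e \<le> (\<Sum>k<N. pmf (S n) k)"
      proof (intro exI allI impI)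
        fix n assume "n \<ge> M"
        then have "dV (S n) T \<le> e" by (rule M)
        moreover have "\<bar>(\<Sum>k<N. pmf (S n) k) - (\<Sum>k<N. pmf T k)\<bar> \<le> dV (S n) T"
          by (rule partial_le_dV) simp
        ultimately show "1 - 2 * e \<le> (\<Sum>k<N. pmf (S n) k)" using N by linarith
      qed
    qed
    also have "\<dots> \<le> suminf f" by (rule sum_le_suminf[OF sf]) (auto intro: f0)
    finally show ?thesis .
  qed
  have s1: "suminf f = 1"
  proof (rule antisym[OF sle])
    show "1 \<le> suminf f"
    proof (rule field_le_epsilon)
      fix e :: real assume "0 < e"
      then show "1 \<le> suminf f + e" using sge[of "e/2"] by simp
    qed
  qed
  have prob: "(\<integral>\<^sup>+x. f x \<partial>count_space UNIV) = 1"
    unfolding nn_integral_count_space_nat using suminf_ennreal2[OF f0 sf] s1 by simp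
  define F where "F = embed_pmf f"
  have pF: "pmf F k = f k" for k unfolding F_def by (rule pmf_embed_pmf[OF f0 prob])
  define M where "M = distr (measure_pmf F) borel real"
  have rd: "real_distribution M"
    unfolding M_def real_distribution_def real_distribution_axioms_def
    by (auto intro!: prob_space.prob_space_distr measure_pmf.prob_space_axioms)
  have wc: "weak_conv_m (\<lambda>n. distr (measure_pmf (S n)) borel real) M"
    unfolding weak_conv_m_def weak_conv_def M_def cdf_distr_pmf pF
    using limsum by blast
  show ?thesis using rd wc by blast
qed



lemma structure_lemma:
  fixes c :: "nat \<Rightarrow> real" and p :: "nat \<Rightarrow> nat \<Rightarrow> real"
  assumes c_pos: "\<And>i. i \<ge> 1 \<Longrightarrow> 0 < c i"
    and fmne: "\<And>n. n \<ge> 2 \<Longrightarrow> FMNE c n (p n)"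
  obtains y \<mu> \<delta> L where
    "\<And>i. 0 \<le> y i" "y 0 = 0" "0 < \<mu>"
    "\<And>n. 2 \<le> n \<Longrightarrow> 0 \<le> \<delta> n" "\<And>n. 2 \<le> n \<Longrightarrow> L n = \<mu> + \<delta> n"
    "L \<longlonglongrightarrow> \<mu>" "\<And>n. 2 \<le> n \<Longrightarrow> L n \<le> L 2"
    "\<And>n i. 2 \<le> n \<Longrightarrow> i \<in> {1..n} \<Longrightarrow> p n i = 1 - exp (- (y i + \<delta> n))"
    "\<And>n. 2 \<le> n \<Longrightarrow> (\<Sum>i=1..n. y i + \<delta> n) = L n"
    "\<And>n. 2 \<le> n \<Longrightarrow> (\<Prod>i=1..n. 1 - p n i) = exp (- L n)"
    "\<And>n i. 2 \<le> n \<Longrightarrow> i \<in> {1..n} \<Longrightarrow> 0 < p n i \<and> p n i < 1"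
proof -
  define a where "a i = c i / (1 + c i)" for i
  define l where "l i = - ln (a i)" for i
  have a01: "0 < a i" "a i < 1" if "i \<ge> 1" for i
    using c_pos[OF that] unfolding a_def by (auto simp: field_simps)
  have l0: "0 < l i" if "i \<ge> 1" for i
    using a01[OF that] unfolding l_def by simp
  have p01: "0 < p n i \<and> p n i < 1" if "2 \<le> n" "i \<in> {1..n}" for n i
    using fmne[OF that(1)] that(2) unfolding FMNE_def by auto
  have prod: "(\<Prod>j\<in>{1..n}-{i}. 1 - p n j) = a i" if "2 \<le> n" "i \<in> {1..n}" for n i
    unfolding a_def using that c_pos[of i] by (intro FMNE_prod[OF fmne[OF that(1)]]) auto
  define L where "L n = - (\<Sum>j=1..n. ln (1 - p n j))" for n
  have lnp: "ln (1 - p n i) = l i - L n" if n: "2 \<le> n" and i: "i \<in> {1..n}" for n i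
  proof -
    have "ln (a i) = (\<Sum>j\<in>{1..n}-{i}. ln (1 - p n j))"
      unfolding prod[OF n i, symmetric] using p01[OF n] by (subst ln_prod) (auto, force)
    moreover have "(\<Sum>j=1..n. ln (1 - p n j)) = ln (1 - p n i) + (\<Sum>j\<in>{1..n}-{i}. ln (1 - p n j))"
      using i by (simp add: sum.remove)
    ultimately show ?thesis unfolding L_def l_def by simp
  qed
  have pform: "p n i = 1 - exp (l i - L n)" if n: "2 \<le> n" and i: "i \<in> {1..n}" for n i
  proof -
    have "exp (ln (1 - p n i)) = 1 - p n i" using p01[OF n i] by simp
    then show ?thesis using lnp[OF n i] by simp
  qed
  have xpos: "l i < L n" if n: "2 \<le> n" and i: "i \<in> {1..n}" for n i
  proof -
    have "ln (1 - p n i) < 0" using p01[OF n i] by simp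
    then show ?thesis using lnp[OF n i] by simp
  qed
  have sumx: "(\<Sum>i=1..n. L n - l i) = L n" if n: "2 \<le> n" for n
  proof -
    have "(\<Sum>i=1..n. L n - l i) = (\<Sum>i=1..n. - ln (1 - p n i))"
      using lnp[OF n] by (intro sum.cong) auto
    also have "\<dots> = L n" unfolding L_def by (simp add: sum_negf)
    finally show ?thesis .
  qed
  have sumL: "(real n - 1) * L n = (\<Sum>i=1..n. l i)" if n: "2 \<le> n" for n
  proof -
    have "(\<Sum>i=1..n. L n - l i) = real n * L n - (\<Sum>i=1..n. l i)"
      by (simp add: sum_subtractf)
    then show ?thesis using sumx[OF n] by (simp add: algebra_simps)
  qed
  have dec: "L (Suc n) < L n" if n: "2 \<le> n" for n
  proof -
    have n1: "2 \<le> Suc n" using n by simp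
    have a1: "real n * L (Suc n) = (\<Sum>i=1..n. l i) + l (Suc n)"
      using sumL[OF n1] by simp
    have a2: "(real n - 1) * L n = (\<Sum>i=1..n. l i)" by (rule sumL[OF n])
    have a3: "l (Suc n) < L (Suc n)" using xpos[OF n1, of "Suc n"] by simp
    have "(real n - 1) * L (Suc n) < (real n - 1) * L n"
      using a1 a2 a3 by (simp add: algebra_simps)
    moreover have "0 < real n - 1" using n by simp
    ultimately show ?thesis by simp
  qed
  have Lpos: "l 1 < L n" if "2 \<le> n" for n using xpos[OF that, of 1] that by simp
  have Lmono: "L m \<le> L n" if "2 \<le> n" "n \<le> m" for n m
    using that(2,1)
  proof (induction m rule: dec_induct)
    case base then show ?case by simp
  next
    case (step m) then show ?case using dec[of m] by simp
  qed
  define X where "X k = L (k + 2)" for k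
  have decX: "decseq X" unfolding decseq_def X_def by (auto intro: Lmono)
  have bX: "\<forall>i. 0 \<le> X i"
  proof
    fix i have "l 1 < L (i + 2)" by (rule Lpos) simp
    then show "0 \<le> X i" unfolding X_def using l0[of 1] by simp
  qed
  obtain \<mu> where mu: "X \<longlonglongrightarrow> \<mu>" "\<forall>i. \<mu> \<le> X i" using decseq_convergent[OF decX bX] by blast
  have Llim: "L \<longlonglongrightarrow> \<mu>" using mu(1) unfolding X_def by (rule LIMSEQ_offset)
  have muL: "\<mu> \<le> L n" if "2 \<le> n" for n using mu(2) that unfolding X_def
    by (metis le_add_diff_inverse2)
  have lmu: "l i \<le> \<mu>" if "1 \<le> i" for i
  proof (rule LIMSEQ_le_const[OF Llim])
    show "\<exists>N. \<forall>n\<ge>N. l i \<le> L n"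
      using that by (intro exI[of _ "i + 2"]) (auto intro!: less_imp_le[OF xpos])
  qed
  have mupos: "0 < \<mu>" using lmu[of 1] l0[of 1] by simp
  define y where "y i = (if 1 \<le> i then \<mu> - l i else 0)" for i
  define \<delta> where "\<delta> n = L n - \<mu>" for n
  show ?thesis
  proof (rule that[of y \<mu> \<delta> L])
    show "0 \<le> y i" for i unfolding y_def using lmu by auto
    show "y 0 = 0" unfolding y_def by simp
    show "0 < \<mu>" by (rule mupos)
    show "0 \<le> \<delta> n" if "2 \<le> n" for n unfolding \<delta>_def using muL[OF that] by simp
    show "L n = \<mu> + \<delta> n" for n unfolding \<delta>_def by simp
    show "L \<longlonglongrightarrow> \<mu>" by (rule Llim)
    show "L n \<le> L 2" if "2 \<le> n" for n using Lmono[OF _ that] by simp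
    show "p n i = 1 - exp (- (y i + \<delta> n))" if "2 \<le> n" "i \<in> {1..n}" for n i
      using pform[OF that] that(2) unfolding y_def \<delta>_def by simp
    show "(\<Sum>i=1..n. y i + \<delta> n) = L n" if n: "2 \<le> n" for n
    proof -
      have "(\<Sum>i=1..n. y i + \<delta> n) = (\<Sum>i=1..n. L n - l i)"
        by (rule sum.cong) (auto simp: y_def \<delta>_def)
      then show ?thesis using sumx[OF n] by simp
    qed
    show "(\<Prod>i=1..n. 1 - p n i) = exp (- L n)" if n: "2 \<le> n" for n
    proof -
      have "exp (- L n) = (\<Prod>i=1..n. exp (ln (1 - p n i)))" unfolding L_def by (simp add: exp_sum)
      also have "\<dots> = (\<Prod>i=1..n. 1 - p n i)" using p01[OF n] by (intro prod.cong) auto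
      finally show ?thesis by simp
    qed
    show "0 < p n i \<and> p n i < 1" if "2 \<le> n" "i \<in> {1..n}" for n i by (rule p01[OF that])
  qed
qed



lemma bern_sum_cong: "(\<And>i. i \<in> {1..m} \<Longrightarrow> p i = q i) \<Longrightarrow> bern_sum_pmf p m = bern_sum_pmf q m"
  by (induction m) auto

lemma sum_split_shift: fixes n K :: nat and f :: "nat \<Rightarrow> 'a::comm_monoid_add" assumes "K \<le> n"
  shows "(\<Sum>i=1..n. f i) = (\<Sum>i=1..K. f i) + (\<Sum>i=1..n-K. f (K + i))"
proof -
  have "{1..n} = {1..K} \<union> {K+1..n}" using assms by auto
  then have "(\<Sum>i=1..n. f i) = (\<Sum>i=1..K. f i) + (\<Sum>i=K+1..n. f i)"
    by (simp add: sum.union_disjoint)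
  also have "(\<Sum>i=K+1..n. f i) = (\<Sum>i=1..n-K. f (K + i))"
    using sum.shift_bounds_cl_nat_ivl[of f 1 K "n - K"] assms by (simp add: add.commute)
  finally show ?thesis .
qed

lemma main_ii:
  fixes c :: "nat \<Rightarrow> real" and p :: "nat \<Rightarrow> nat \<Rightarrow> real"
  assumes c_pos: "\<And>i. i \<ge> 1 \<Longrightarrow> 0 < c i"
    and fmne: "\<And>n. n \<ge> 2 \<Longrightarrow> FMNE c n (p n)"
    and \<epsilon>: "0 < \<epsilon>"
  shows "\<exists>lam>0. \<exists>K q. (\<forall>k\<in>{1..K}. 0 \<le> q k \<and> q k \<le> 1) \<and>
     eventually (\<lambda>n. dV (bern_sum_pmf (p n) n) (conv_pmf (poisson_pmf lam) (bern_sum_pmf q K)) \<le> \<epsilon>) sequentially"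
proof -
  obtain L y \<delta> \<mu> where y0: "\<And>i. 0 \<le> y i" "y 0 = 0" and mupos: "0 < \<mu>"
    and d0: "\<And>n. 2 \<le> n \<Longrightarrow> 0 \<le> \<delta> n" and Ld: "\<And>n. 2 \<le> n \<Longrightarrow> L n = \<mu> + \<delta> n"
    and Llim: "L \<longlonglongrightarrow> \<mu>" and LB: "\<And>n. 2 \<le> n \<Longrightarrow> L n \<le> L 2"
    and pf: "\<And>n i. 2 \<le> n \<Longrightarrow> i \<in> {1..n} \<Longrightarrow> p n i = 1 - exp (- (y i + \<delta> n))"
    and sumL: "\<And>n. 2 \<le> n \<Longrightarrow> (\<Sum>i=1..n. y i + \<delta> n) = L n"
    and prodE: "\<And>n. 2 \<le> n \<Longrightarrow> (\<Prod>i=1..n. 1 - p n i) = exp (- L n)"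
    and p01: "\<And>n i. 2 \<le> n \<Longrightarrow> i \<in> {1..n} \<Longrightarrow> 0 < p n i \<and> p n i < 1"
    using structure_lemma[OF c_pos fmne] by blast
  define B where "B = L 2"
  have Bpos: "0 < B" unfolding B_def using Ld[of 2] d0[of 2] mupos by simp
  have sumy: "(\<Sum>i=1..n. y i) \<le> L n" if "2 \<le> n" for n
  proof -
    have "(\<Sum>i=1..n. y i) \<le> (\<Sum>i=1..n. y i + \<delta> n)" using d0[OF that] by (intro sum_mono) auto
    then show ?thesis using sumL[OF that] by simp
  qed
  have sumy_mono: "(\<Sum>i=1..m. y i) \<le> (\<Sum>i=1..n. y i)" if "m \<le> n" for m n
    using that y0 by (intro sum_mono2) auto
  have pb: "(\<Sum>i<m. y i) \<le> B" for m
  proof -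
    have "(\<Sum>i<m. y i) \<le> (\<Sum>i\<in>{0..m+2}. y i)" using y0 by (intro sum_mono2) auto
    also have "\<dots> = y 0 + (\<Sum>i=1..m+2. y i)" by (subst sum.atLeast_Suc_atMost) auto
    also have "\<dots> \<le> L (m + 2)" using y0(2) sumy[of "m+2"] by simp
    also have "\<dots> \<le> B" unfolding B_def by (rule LB) simp
    finally show ?thesis .
  qed
  have sy: "summable y" by (rule summableI_nonneg_bounded[OF y0(1) pb])
  have ylim: "y \<longlonglongrightarrow> 0" by (rule summable_LIMSEQ_zero[OF sy])
  define \<eta> where "\<eta> = \<epsilon> / (8 * (B + 1))"
  have \<eta>pos: "0 < \<eta>" unfolding \<eta>_def using \<epsilon> Bpos by simp
  obtain K where K: "\<And>j. j \<ge> K \<Longrightarrow> y j \<le> \<eta>"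
  proof -
    obtain N where "\<forall>j\<ge>N. dist (y j) 0 < \<eta>" using ylim \<eta>pos unfolding LIMSEQ_def by blast
    then show ?thesis using that by (force simp: dist_real_def)
  qed
  define q where "q i = 1 - exp (- y i)" for i
  have q01: "0 \<le> q i \<and> q i \<le> 1" for i unfolding q_def using y0(1)[of i] by simp
  define lamK where "lamK = \<mu> - (\<Sum>i=1..K. y i)"
  have lamK0: "0 \<le> lamK"
  proof -
    have "(\<Sum>i=1..K. y i) \<le> \<mu>"
    proof (rule LIMSEQ_le_const[OF Llim])
      show "\<exists>N. \<forall>n\<ge>N. (\<Sum>i=1..K. y i) \<le> L n"
      proof (intro exI[of _ "K + 2"] allI impI)
        fix n assume "K + 2 \<le> n"
        then show "(\<Sum>i=1..K. y i) \<le> L n" using sumy_mono[of K n] sumy[of n] by simp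
      qed
    qed
    then show ?thesis unfolding lamK_def by simp
  qed
  define a0 where "a0 = \<epsilon> / 8"
  have a0pos: "0 < a0" unfolding a0_def using \<epsilon> by simp
  define lam where "lam = lamK + a0"
  have lampos: "0 < lam" unfolding lam_def using lamK0 a0pos by simp
  define dd where "dd = \<epsilon> / (4 * (4 * real K + 2 * B + 2))"
  have ddpos: "0 < dd" unfolding dd_def using \<epsilon> Bpos by simp
  have bound: "dV (bern_sum_pmf (p n) n) (conv_pmf (poisson_pmf lam) (bern_sum_pmf q K)) \<le> \<epsilon>"
    if n: "n \<ge> K + 2" and dn: "\<delta> n \<le> dd" for n
  proof -
    have n2: "2 \<le> n" and Kn: "K \<le> n" using n by auto
    define x where "x i = y (K + i) + \<delta> n" for i
    have dn0: "0 \<le> \<delta> n" by (rule d0[OF n2])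
    have xpos: "0 < x i" if "i \<in> {1..n-K}" for i
    proof -
      have i: "K + i \<in> {1..n}" using that Kn by auto
      have "0 < 1 - exp (- x i)" using p01[OF n2 i] pf[OF n2 i] unfolding x_def by simp
      then show ?thesis by simp
    qed
    have xle: "x i \<le> \<eta> + \<delta> n" for i unfolding x_def using K[of "K + i"] by simp
    define tail where "tail = bern_sum_pmf (\<lambda>i. 1 - exp (- x i)) (n - K)"
    have S: "bern_sum_pmf (p n) n = conv_pmf (bern_sum_pmf (p n) K) tail"
    proof -
      have "bern_sum_pmf (\<lambda>i. p n (K + i)) (n - K) = tail"
        unfolding tail_def x_def using Kn by (intro bern_sum_cong) (auto simp: pf[OF n2])
      then show ?thesis using bern_sum_split[OF Kn, of "p n"] by simp
    qed
    define s where "s = (\<Sum>i=1..n-K. x i)"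
    have s0: "0 \<le> s" unfolding s_def using xpos by (intro sum_nonneg) (auto intro: less_imp_le)
    have seq: "s = L n - (\<Sum>i=1..K. y i) - real K * \<delta> n"
    proof -
      have "L n = (\<Sum>i=1..K. y i + \<delta> n) + s"
        unfolding sumL[OF n2, symmetric] s_def x_def by (rule sum_split_shift[OF Kn])
      then show ?thesis by (simp add: sum.distrib)
    qed
    have sB: "s \<le> B"
    proof -
      have "0 \<le> (\<Sum>i=1..K. y i)" using y0 by (intro sum_nonneg) auto
      moreover have "0 \<le> real K * \<delta> n" using dn0 by simp
      ultimately have "s \<le> L n" using seq by linarith
      then show ?thesis unfolding B_def using LB[OF n2] by simp
    qed
    have T1: "dV (bern_sum_pmf (p n) K) (bern_sum_pmf q K) \<le> 2 * (real K * \<delta> n)"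
    proof -
      have "dV (bern_sum_pmf (p n) K) (bern_sum_pmf q K) \<le> 2 * (\<Sum>i=1..K. \<bar>p n i - q i\<bar>)"
        using p01[OF n2] q01 Kn by (intro dV_bern_sum) (auto intro: less_imp_le)
      also have "(\<Sum>i=1..K. \<bar>p n i - q i\<bar>) \<le> (\<Sum>i=1..K. \<delta> n)"
      proof (rule sum_mono)
        fix i assume i: "i \<in> {1..K}"
        then have i': "i \<in> {1..n}" using Kn by auto
        have "p n i - q i = exp (- y i) * (1 - exp (- \<delta> n))"
          unfolding pf[OF n2 i'] q_def by (simp add: exp_add[symmetric] algebra_simps)
        moreover have "exp (- y i) \<le> 1" using y0(1)[of i] by simp
        moreover have "0 \<le> 1 - exp (- \<delta> n)" "1 - exp (- \<delta> n) \<le> \<delta> n"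
          using dn0 exp_ineqs(1)[OF dn0] by auto
        ultimately have "0 \<le> p n i - q i" "p n i - q i \<le> 1 * (1 - exp (- \<delta> n))"
          by (simp, metis mult_right_mono)
        then show "\<bar>p n i - q i\<bar> \<le> \<delta> n"
          using \<open>1 - exp (- \<delta> n) \<le> \<delta> n\<close> by simp
      qed
      finally show ?thesis by simp
    qed
    have T2a: "dV tail (conv_pmf (poisson_pmf a0) tail) \<le> 2 * a0"
    proof -
      have "dV tail (conv_pmf (poisson_pmf a0) tail) = dV (conv_pmf (return_pmf 0) tail) (conv_pmf (poisson_pmf a0) tail)"
        by (simp add: conv_return0')
      also have "\<dots> \<le> dV (return_pmf 0) (poisson_pmf a0)" by (rule dV_conv_left)
      also have "\<dots> = 2 * (1 - exp (- a0))" using a0pos by (simp add: dV_return0)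
      also have "\<dots> \<le> 2 * a0" using exp_ineqs(1)[of a0] a0pos by simp
      finally show ?thesis .
    qed
    have T2b: "dV (conv_pmf (poisson_pmf a0) tail) (poisson_pmf (a0 + s)) \<le> 2 * ((\<eta> + \<delta> n) * B)"
    proof -
      have "dV (conv_pmf (poisson_pmf a0) tail) (poisson_pmf (a0 + s)) \<le> 2 * (\<Sum>i=1..n-K. (x i)^2)"
        unfolding tail_def s_def by (rule dV_tail_poisson[OF a0pos xpos])
      also have "(\<Sum>i=1..n-K. (x i)^2) \<le> (\<Sum>i=1..n-K. (\<eta> + \<delta> n) * x i)"
      proof (rule sum_mono)
        fix i assume "i \<in> {1..n-K}"
        then have "0 < x i" by (rule xpos)
        then show "(x i)^2 \<le> (\<eta> + \<delta> n) * x i"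
          using xle[of i] by (simp add: power2_eq_square mult_right_mono)
      qed
      also have "\<dots> = (\<eta> + \<delta> n) * s" unfolding s_def by (simp add: sum_distrib_left)
      also have "\<dots> \<le> (\<eta> + \<delta> n) * B" using sB \<eta>pos dn0 by (intro mult_left_mono) auto
      finally show ?thesis by simp
    qed
    have T2c: "dV (poisson_pmf (a0 + s)) (poisson_pmf lam) \<le> 2 * ((real K + 1) * \<delta> n)"
    proof -
      have "dV (poisson_pmf (a0 + s)) (poisson_pmf lam) \<le> 2 * \<bar>(a0 + s) - lam\<bar>"
        using a0pos s0 lampos by (intro dV_poisson) auto
      also have "(a0 + s) - lam = \<delta> n - real K * \<delta> n"
        unfolding lam_def lamK_def seq using Ld[OF n2] by simp
      also have "\<bar>\<delta> n - real K * \<delta> n\<bar> \<le> (real K + 1) * \<delta> n" using dn0 by (simp add: abs_le_iff algebra_simps)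
      finally show ?thesis by simp
    qed
    have T2: "dV tail (poisson_pmf lam) \<le> 2 * a0 + 2 * ((\<eta> + \<delta> n) * B) + 2 * ((real K + 1) * \<delta> n)"
      using dV_triangle[of tail "poisson_pmf lam" "conv_pmf (poisson_pmf a0) tail"]
        dV_triangle[of "conv_pmf (poisson_pmf a0) tail" "poisson_pmf lam" "poisson_pmf (a0 + s)"]
        T2a T2b T2c by linarith
    have "dV (bern_sum_pmf (p n) n) (conv_pmf (poisson_pmf lam) (bern_sum_pmf q K))
        = dV (conv_pmf (bern_sum_pmf (p n) K) tail) (conv_pmf (bern_sum_pmf q K) (poisson_pmf lam))"
      unfolding S by (simp add: conv_comm[of "poisson_pmf lam"])
    also have "\<dots> \<le> dV (bern_sum_pmf (p n) K) (bern_sum_pmf q K) + dV tail (poisson_pmf lam)"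
      by (rule dV_conv)
    also have "\<dots> \<le> 2 * (real K * \<delta> n) + (2 * a0 + 2 * ((\<eta> + \<delta> n) * B) + 2 * ((real K + 1) * \<delta> n))"
      using T1 T2 by linarith
    also have "\<dots> \<le> \<epsilon>"
    proof -
      have e1: "2 * a0 = \<epsilon> / 4" unfolding a0_def by simp
      have e2: "2 * (\<eta> * B) \<le> \<epsilon> / 4"
      proof -
        have "2 * (\<eta> * B) = \<epsilon> / 4 * (B / (B + 1))" unfolding \<eta>_def using Bpos by (simp add: field_simps)
        also have "\<dots> \<le> \<epsilon> / 4 * 1" using \<epsilon> Bpos by (intro mult_left_mono) auto
        finally show ?thesis by simp
      qed
      have e3: "\<delta> n * (4 * real K + 2 * B + 2) \<le> \<epsilon> / 4"
      proof -
        have "\<delta> n * (4 * real K + 2 * B + 2) \<le> dd * (4 * real K + 2 * B + 2)"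
          using dn Bpos by (intro mult_right_mono) auto
        also have "\<dots> = \<epsilon> / 4" unfolding dd_def using Bpos by (simp add: field_simps)
        finally show ?thesis .
      qed
      show ?thesis using e1 e2 e3 \<epsilon> by (simp add: algebra_simps)
    qed
    finally show ?thesis .
  qed
  have ev: "eventually (\<lambda>n. n \<ge> K + 2 \<and> \<delta> n \<le> dd) sequentially"
  proof -
    have "eventually (\<lambda>n. dist (L n) \<mu> < dd) sequentially"
      using Llim ddpos by (rule tendstoD)
    moreover have "eventually (\<lambda>n. n \<ge> K + 2) sequentially" by (rule eventually_ge_at_top)
    ultimately show ?thesis
    proof eventually_elim
      case (elim n)
      then have "2 \<le> n" by simp
      then show ?case using elim Ld[of n] by (simp add: dist_real_def)
    qed
  qed
  have "eventually (\<lambda>n. dV (bern_sum_pmf (p n) n) (conv_pmf (poisson_pmf lam) (bern_sum_pmf q K)) \<le> \<epsilon>) sequentially"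
    using ev by eventually_elim (auto intro: bound)
  then show ?thesis using lampos q01 by blast
qed



lemma union_bound:
  assumes "finite A" "\<And>i. i \<in> A \<Longrightarrow> 0 \<le> p i \<and> p i \<le> (1::real)"
  shows "1 - (\<Prod>i\<in>A. 1 - p i) \<le> (\<Sum>i\<in>A. p i)"
  using assms
proof (induction A rule: finite_induct)
  case empty then show ?case by simp
next
  case (insert x F)
  have P0: "0 \<le> (\<Prod>i\<in>F. 1 - p i)" using insert.prems by (intro prod_nonneg) auto
  have P1: "(\<Prod>i\<in>F. 1 - p i) \<le> 1" using insert.prems by (intro prod_le_1) auto
  have px: "0 \<le> p x" "p x \<le> 1" using insert.prems by auto
  have IH: "1 - (\<Prod>i\<in>F. 1 - p i) \<le> (\<Sum>i\<in>F. p i)" using insert.IH insert.prems by auto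
  have "p x * (\<Prod>i\<in>F. 1 - p i) \<le> p x * 1" using px P1 by (intro mult_left_mono) auto
  then show ?case using insert.hyps IH by (simp add: algebra_simps)
qed

lemma sum_1_to_lessThan: "(g::nat \<Rightarrow> real) 0 = 0 \<Longrightarrow> (\<Sum>i=1..n. g i) = (\<Sum>i<Suc n. g i)"
proof -
  assume g0: "g 0 = 0"
  have "{..<Suc n} = insert 0 {1..n}" by auto
  then show ?thesis using g0 by simp
qed

lemma partial_lim: "summable (g::nat \<Rightarrow> real) \<Longrightarrow> g 0 = 0 \<Longrightarrow> (\<lambda>n. \<Sum>i=1..n. g i) \<longlonglongrightarrow> suminf g"
proof -
  assume s: "summable g" and g0: "g 0 = 0"
  have "(\<lambda>n. \<Sum>i<Suc n. g i) \<longlonglongrightarrow> suminf g"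
    using summable_LIMSEQ[OF s] by (rule LIMSEQ_Suc)
  then show ?thesis using sum_1_to_lessThan[of g, OF g0] by simp
qed

lemma main_sum:
  fixes c :: "nat \<Rightarrow> real" and p :: "nat \<Rightarrow> nat \<Rightarrow> real"
  assumes c_pos: "\<And>i. i \<ge> 1 \<Longrightarrow> 0 < c i"
    and fmne: "\<And>n. n \<ge> 2 \<Longrightarrow> FMNE c n (p n)"
  shows "\<exists>L0>0. (\<lambda>n. \<Sum>i=1..n. p n i) \<longlonglongrightarrow> L0"
proof -
  obtain L y \<delta> \<mu> where y0: "\<And>i. 0 \<le> y i" "y 0 = 0" and mupos: "0 < \<mu>"
    and d0: "\<And>n. 2 \<le> n \<Longrightarrow> 0 \<le> \<delta> n" and Ld: "\<And>n. 2 \<le> n \<Longrightarrow> L n = \<mu> + \<delta> n"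
    and Llim: "L \<longlonglongrightarrow> \<mu>" and LB: "\<And>n. 2 \<le> n \<Longrightarrow> L n \<le> L 2"
    and pf: "\<And>n i. 2 \<le> n \<Longrightarrow> i \<in> {1..n} \<Longrightarrow> p n i = 1 - exp (- (y i + \<delta> n))"
    and sumL: "\<And>n. 2 \<le> n \<Longrightarrow> (\<Sum>i=1..n. y i + \<delta> n) = L n"
    and prodE: "\<And>n. 2 \<le> n \<Longrightarrow> (\<Prod>i=1..n. 1 - p n i) = exp (- L n)"
    and p01: "\<And>n i. 2 \<le> n \<Longrightarrow> i \<in> {1..n} \<Longrightarrow> 0 < p n i \<and> p n i < 1"
    using structure_lemma[OF c_pos fmne] by blast
  define B where "B = L 2"
  have sumy: "(\<Sum>i=1..n. y i) \<le> L n" if "2 \<le> n" for n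
  proof -
    have "(\<Sum>i=1..n. y i) \<le> (\<Sum>i=1..n. y i + \<delta> n)" using d0[OF that] by (intro sum_mono) auto
    then show ?thesis using sumL[OF that] by simp
  qed
  have pb: "(\<Sum>i<m. y i) \<le> B" for m
  proof -
    have "(\<Sum>i<m. y i) \<le> (\<Sum>i\<in>{0..m+2}. y i)" using y0 by (intro sum_mono2) auto
    also have "\<dots> = y 0 + (\<Sum>i=1..m+2. y i)" by (subst sum.atLeast_Suc_atMost) auto
    also have "\<dots> \<le> L (m + 2)" using y0(2) sumy[of "m+2"] by simp
    also have "\<dots> \<le> B" unfolding B_def by (rule LB) simp
    finally show ?thesis .
  qed
  have sy: "summable y" by (rule summableI_nonneg_bounded[OF y0(1) pb])
  define g where "g i = 1 - exp (- y i)" for i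
  have g0: "0 \<le> g i" "g i \<le> y i" for i
    unfolding g_def using y0(1)[of i] exp_ineqs(1)[of "y i"] by auto
  have sg: "summable g"
    by (rule summable_comparison_test'[OF sy, of 0]) (use g0 in auto)
  have gz: "g 0 = 0" unfolding g_def using y0(2) by simp
  define G where "G n = (\<Sum>i=1..n. g i)" for n
  have Glim: "G \<longlonglongrightarrow> suminf g" unfolding G_def by (rule partial_lim[OF sg gz])
  have Ylim: "(\<lambda>n. \<Sum>i=1..n. y i) \<longlonglongrightarrow> suminf y" by (rule partial_lim[OF sy y0(2)])
  define lam0 where "lam0 = \<mu> - suminf y"
  have ev2: "eventually (\<lambda>n. 2 \<le> n) sequentially" by (rule eventually_ge_at_top)
  have nd: "(\<lambda>n. real n * \<delta> n) \<longlonglongrightarrow> lam0"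
  proof -
    have "(\<lambda>n. L n - (\<Sum>i=1..n. y i)) \<longlonglongrightarrow> lam0" unfolding lam0_def by (intro tendsto_diff Llim Ylim)
    moreover have "eventually (\<lambda>n. L n - (\<Sum>i=1..n. y i) = real n * \<delta> n) sequentially"
      using ev2
    proof eventually_elim
      case (elim n)
      have "(\<Sum>i=1..n. y i + \<delta> n) = (\<Sum>i=1..n. y i) + real n * \<delta> n" by (simp add: sum.distrib)
      then show ?case using sumL[OF elim] by simp
    qed
    ultimately show ?thesis by (rule Lim_transform_eventually)
  qed
  have dlim: "\<delta> \<longlonglongrightarrow> 0"
  proof -
    have "(\<lambda>n. L n - \<mu>) \<longlonglongrightarrow> \<mu> - \<mu>" by (intro tendsto_diff Llim tendsto_const)
    moreover have "eventually (\<lambda>n. L n - \<mu> = \<delta> n) sequentially"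
      using ev2 by eventually_elim (simp add: Ld)
    ultimately show ?thesis by (simp add: Lim_transform_eventually)
  qed
  define D where "D n = 1 - exp (- \<delta> n)" for n
  have Dlim: "D \<longlonglongrightarrow> 0"
  proof -
    have "(\<lambda>n. 1 - exp (- \<delta> n)) \<longlonglongrightarrow> 1 - exp (- 0)"
      by (intro tendsto_diff tendsto_const tendsto_exp tendsto_minus dlim)
    then show ?thesis unfolding D_def by simp
  qed
  have Elim: "(\<lambda>n. real n * D n) \<longlonglongrightarrow> lam0"
  proof (rule tendsto_sandwich[of "\<lambda>n. real n * \<delta> n - real n * \<delta> n * \<delta> n" _ _ "\<lambda>n. real n * \<delta> n"])
    show "eventually (\<lambda>n. real n * \<delta> n - real n * \<delta> n * \<delta> n \<le> real n * D n) sequentially"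
      using ev2
    proof eventually_elim
      case (elim n)
      have "\<delta> n - (\<delta> n)^2 \<le> D n" unfolding D_def by (rule exp_ineqs(2)[OF d0[OF elim]])
      then have "real n * (\<delta> n - (\<delta> n)^2) \<le> real n * D n" by (intro mult_left_mono) auto
      then show ?case by (simp add: algebra_simps power2_eq_square)
    qed
    show "eventually (\<lambda>n. real n * D n \<le> real n * \<delta> n) sequentially"
      using ev2
    proof eventually_elim
      case (elim n)
      have "D n \<le> \<delta> n" unfolding D_def by (rule exp_ineqs(1)[OF d0[OF elim]])
      then show ?case by (intro mult_left_mono) auto
    qed
    show "(\<lambda>n. real n * \<delta> n) \<longlonglongrightarrow> lam0" by (rule nd)
    have "(\<lambda>n. real n * \<delta> n - real n * \<delta> n * \<delta> n) \<longlonglongrightarrow> lam0 - lam0 * 0"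
      by (intro tendsto_diff tendsto_mult nd dlim)
    then show "(\<lambda>n. real n * \<delta> n - real n * \<delta> n * \<delta> n) \<longlonglongrightarrow> lam0" by simp
  qed
  define L0 where "L0 = suminf g + lam0"
  have sumeq: "eventually (\<lambda>n. G n + real n * D n - D n * G n = (\<Sum>i=1..n. p n i)) sequentially"
    using ev2
  proof eventually_elim
    case (elim n)
    have "(\<Sum>i=1..n. p n i) = (\<Sum>i=1..n. g i + D n - D n * g i)"
    proof (rule sum.cong)
      fix i assume i: "i \<in> {1..n}"
      show "p n i = g i + D n - D n * g i"
        unfolding pf[OF elim i] g_def D_def by (simp add: exp_add[symmetric] algebra_simps exp_diff)
    qed simp
    also have "\<dots> = G n + real n * D n - D n * G n"
      unfolding G_def by (simp add: sum.distrib sum_subtractf sum_distrib_left)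
    finally show ?case by simp
  qed
  have lim: "(\<lambda>n. \<Sum>i=1..n. p n i) \<longlonglongrightarrow> L0"
  proof -
    have "(\<lambda>n. G n + real n * D n - D n * G n) \<longlonglongrightarrow> suminf g + lam0 - 0 * suminf g"
      by (intro tendsto_diff tendsto_add tendsto_mult Glim Elim Dlim)
    then have "(\<lambda>n. G n + real n * D n - D n * G n) \<longlonglongrightarrow> L0" unfolding L0_def by simp
    then show ?thesis using sumeq by (rule Lim_transform_eventually)
  qed
  have L0pos: "1 - exp (- \<mu>) \<le> L0"
  proof (rule LIMSEQ_le_const[OF lim])
    show "\<exists>N. \<forall>n\<ge>N. 1 - exp (- \<mu>) \<le> (\<Sum>i=1..n. p n i)"
    proof (intro exI[of _ 2] allI impI)
      fix n :: nat assume n: "2 \<le> n"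
      have "1 - exp (- L n) \<le> (\<Sum>i=1..n. p n i)"
        unfolding prodE[OF n, symmetric] using p01[OF n] by (intro union_bound) (auto intro: less_imp_le)
      moreover have "exp (- L n) \<le> exp (- \<mu>)" using Ld[OF n] d0[OF n] by simp
      ultimately show "1 - exp (- \<mu>) \<le> (\<Sum>i=1..n. p n i)" by linarith
    qed
  qed
  have "0 < 1 - exp (- \<mu>)" using mupos by simp
  then have "0 < L0" using L0pos by linarith
  then show ?thesis using lim by blast
qed

theorem theorem2:
  fixes c :: "nat \<Rightarrow> real" and p :: "nat \<Rightarrow> nat \<Rightarrow> real"
  assumes c_pos: "\<And>i. i \<ge> 1 \<Longrightarrow> 0 < c i"
    and fmne: "\<And>n. n \<ge> 2 \<Longrightarrow> FMNE c n (p n)"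
  shows "((\<exists>M. real_distribution M \<and>
            weak_conv_m (\<lambda>n. distr (measure_pmf (bern_sum_pmf (p n) n)) borel real) M)
         \<longleftrightarrow> (\<exists>L>0. (\<lambda>n. \<Sum>i=1..n. p n i) \<longlonglongrightarrow> L)) \<and>
         (\<forall>\<epsilon>>0.
          \<exists>lam>0. \<exists>K q. (\<forall>k\<in>{1..K}. 0 \<le> q k \<and> q k \<le> 1) \<and>
            limsup (\<lambda>n. ereal (dV (bern_sum_pmf (p n) n)
                                 (conv_pmf (poisson_pmf lam) (bern_sum_pmf q K)))) \<le> ereal \<epsilon>)"
proof -
  have wk: "\<exists>M. real_distribution M \<and>
            weak_conv_m (\<lambda>n. distr (measure_pmf (bern_sum_pmf (p n) n)) borel real) M"
  proof (rule weak_conv_from_dV)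
    fix e :: real assume e: "0 < e"
    then obtain lam K q where "eventually (\<lambda>n. dV (bern_sum_pmf (p n) n) (conv_pmf (poisson_pmf lam) (bern_sum_pmf q K)) \<le> e) sequentially"
      using main_ii[OF c_pos fmne e] by blast
    then show "\<exists>T. eventually (\<lambda>n. dV (bern_sum_pmf (p n) n) T \<le> e) sequentially" by blast
  qed
  have rhs: "\<exists>L>0. (\<lambda>n. \<Sum>i=1..n. p n i) \<longlonglongrightarrow> L" by (rule main_sum[OF c_pos fmne])
  have ii: "\<exists>lam>0. \<exists>K q. (\<forall>k\<in>{1..K}. 0 \<le> q k \<and> q k \<le> 1) \<and>
            limsup (\<lambda>n. ereal (dV (bern_sum_pmf (p n) n)
                                 (conv_pmf (poisson_pmf lam) (bern_sum_pmf q K)))) \<le> ereal \<epsilon>"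
    if e: "0 < \<epsilon>" for \<epsilon> :: real
  proof -
    obtain lam K q where lam: "0 < lam" and q: "\<forall>k\<in>{1..K}. 0 \<le> q k \<and> q k \<le> 1"
      and ev: "eventually (\<lambda>n. dV (bern_sum_pmf (p n) n) (conv_pmf (poisson_pmf lam) (bern_sum_pmf q K)) \<le> \<epsilon>) sequentially"
      using main_ii[OF c_pos fmne e] by blast
    have "limsup (\<lambda>n. ereal (dV (bern_sum_pmf (p n) n) (conv_pmf (poisson_pmf lam) (bern_sum_pmf q K)))) \<le> ereal \<epsilon>"
      by (rule Limsup_bounded) (use ev in \<open>eventually_elim, simp\<close>)
    then show ?thesis using lam q by blast
  qed
  show ?thesis using wk rhs ii by blast
qed

end
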